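(* If a solution $(x_1(t),x_2(t),x_3(t))$ of the Ricci flow system $\frac{dx_i}{dt}=-2r_ix_i$ satisfies $x_2(0)>x_1(0)>x_3(0)>0$, then $x_2(t)>x_1(t)>x_3(t)$ for all $t$ in its interval of existence. The same holds for the volume-normalized Ricci flow.
   Context: Here $d\in\{2,4,8\}$. For positive reals $x_1,x_2,x_3$ and $\{i,j,k\}=\{1,2,3\}$, define $$r_i=\frac{d x_i^2-d x_j^2-d x_k^2+(10d-8)x_jx_k}{2x_1x_2x_3}.$$ The Ricci flow of the $G$-invariant metrics $\sum_i x_i\langle\cdot,\cdot\rangle_0|_{V_i}$ on the flag manifolds $G/K$ is the ODE system $\frac{dx_i}{dt}=-2r_ix_i$. *)

theory Defs
  imports "HOL-Analysis.Analysis"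
begin

definition ric :: "real \<Rightarrow> real \<Rightarrow> real \<Rightarrow> real \<Rightarrow> real" where
  "ric d xi xj xk = (d * xi^2 - d * xj^2 - d * xk^2 + (10*d - 8) * xj * xk) / (2 * xi * xj * xk)"

definition r1 :: "real \<Rightarrow> real \<Rightarrow> real \<Rightarrow> real \<Rightarrow> real" where
  "r1 d x1 x2 x3 = ric d x1 x2 x3"
definition r2 :: "real \<Rightarrow> real \<Rightarrow> real \<Rightarrow> real \<Rightarrow> real" where
  "r2 d x1 x2 x3 = ric d x2 x3 x1"
definition r3 :: "real \<Rightarrow> real \<Rightarrow> real \<Rightarrow> real \<Rightarrow> real" where
  "r3 d x1 x2 x3 = ric d x3 x1 x2"

definition ricci_flow_sol ::
  "real \<Rightarrow> real set \<Rightarrow> (real \<Rightarrow> real) \<Rightarrow> (real \<Rightarrow> real) \<Rightarrow> (real \<Rightarrow> real) \<Rightarrow> bool" where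
  "ricci_flow_sol d I x1 x2 x3 \<longleftrightarrow>
     (\<forall>t\<in>I. x1 t > 0 \<and> x2 t > 0 \<and> x3 t > 0 \<and>
        (x1 has_real_derivative (-2 * r1 d (x1 t) (x2 t) (x3 t) * x1 t)) (at t within I) \<and>
        (x2 has_real_derivative (-2 * r2 d (x1 t) (x2 t) (x3 t) * x2 t)) (at t within I) \<and>
        (x3 has_real_derivative (-2 * r3 d (x1 t) (x2 t) (x3 t) * x3 t)) (at t within I))"

text \<open>Volume-normalized Ricci flow dx_i/dt = -2 x_i (r_i - S/n), where
  S = d (r_1 + r_2 + r_3) is the scalar curvature and n = 3d = dim G/K,
  so S/n = (r_1 + r_2 + r_3)/3.\<close>
definition normalized_ricci_flow_sol ::
  "real \<Rightarrow> real set \<Rightarrow> (real \<Rightarrow> real) \<Rightarrow> (real \<Rightarrow> real) \<Rightarrow> (real \<Rightarrow> real) \<Rightarrow> bool" where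
  "normalized_ricci_flow_sol d I x1 x2 x3 \<longleftrightarrow>
     (\<forall>t\<in>I. x1 t > 0 \<and> x2 t > 0 \<and> x3 t > 0 \<and>
        (let a = r1 d (x1 t) (x2 t) (x3 t); b = r2 d (x1 t) (x2 t) (x3 t);
             c = r3 d (x1 t) (x2 t) (x3 t); S = d * (a + b + c); n = 3 * d in
        (x1 has_real_derivative (-2 * x1 t * (a - S / n))) (at t within I) \<and>
        (x2 has_real_derivative (-2 * x2 t * (b - S / n))) (at t within I) \<and>
        (x3 has_real_derivative (-2 * x3 t * (c - S / n))) (at t within I)))"

end

theory Submission imports Defs begin

lemma nz_aux:
  fixes u g :: "real \<Rightarrow> real"
  assumes sub: "{a..b} \<subseteq> I" and ab: "a \<le> b"
    and der: "\<forall>s\<in>I. (u has_real_derivative u s * g s) (at s within I)"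
    and M: "\<forall>s\<in>{a..b}. \<bar>g s\<bar> \<le> M"
  shows "(u b)^2 * exp (2*M*b) \<ge> (u a)^2 * exp (2*M*a)"
    and "(u a)^2 * exp (-2*M*a) \<ge> (u b)^2 * exp (-2*M*b)"
proof -
  have d: "(u has_real_derivative u s * g s) (at s within {a..b})" if "s \<in> {a..b}" for s
    using der sub that by (meson DERIV_subset subsetD)
  define hh where "hh = (\<lambda>y. (u y)^2 * exp (2*M*y))"
  define Dd where "Dd = (\<lambda>y. 2 * (u y)^2 * (g y + M) * exp (2*M*y))"
  have hd: "(hh has_real_derivative Dd s) (at s within {a..b})" if "s \<in> {a..b}" for s
    unfolding hh_def Dd_def
    by (rule derivative_eq_intros d[OF that] refl)+ (simp add: algebra_simps power2_eq_square)
  have "\<exists>x\<in>{a..b}. hh b - hh a = Dd x * (b - a)"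
    using mvt_very_simple[OF ab, of hh "\<lambda>x h. Dd x * h"] hd
    by (simp add: has_field_derivative_def)
  then obtain x where x: "x \<in> {a..b}" "hh b - hh a = Dd x * (b - a)" by blast
  have "g x + M \<ge> 0" using M x(1) by (smt (verit))
  then have "Dd x \<ge> 0" unfolding Dd_def by (intro mult_nonneg_nonneg) auto
  with x ab have "hh b \<ge> hh a" by (smt (verit) mult_nonneg_nonneg)
  then show "(u b)^2 * exp (2*M*b) \<ge> (u a)^2 * exp (2*M*a)" by (simp add: hh_def)
next
  have d: "(u has_real_derivative u s * g s) (at s within {a..b})" if "s \<in> {a..b}" for s
    using der sub that by (meson DERIV_subset subsetD)
  define hh where "hh = (\<lambda>y. (u y)^2 * exp (-2*M*y))"
  define Dd where "Dd = (\<lambda>y. 2 * (u y)^2 * (g y - M) * exp (-2*M*y))"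
  have hd: "(hh has_real_derivative Dd s) (at s within {a..b})" if "s \<in> {a..b}" for s
    unfolding hh_def Dd_def
    by (rule derivative_eq_intros d[OF that] refl)+ (simp add: algebra_simps power2_eq_square)
  have "\<exists>x\<in>{a..b}. hh b - hh a = Dd x * (b - a)"
    using mvt_very_simple[OF ab, of hh "\<lambda>x h. Dd x * h"] hd
    by (simp add: has_field_derivative_def)
  then obtain x where x: "x \<in> {a..b}" "hh b - hh a = Dd x * (b - a)" by blast
  have "g x - M \<le> 0" using M x(1) by (smt (verit))
  then have "Dd x \<le> 0" unfolding Dd_def
    by (intro mult_nonpos_nonneg mult_nonneg_nonpos) auto
  with x ab have "hh b \<le> hh a" by (smt (verit) mult_nonpos_nonneg)
  then show "(u a)^2 * exp (-2*M*a) \<ge> (u b)^2 * exp (-2*M*b)" by (simp add: hh_def)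
qed

lemma key:
  fixes u g :: "real \<Rightarrow> real"
  assumes I: "is_interval I" "0 \<in> I" "t \<in> I"
    and der: "\<forall>s\<in>I. (u has_real_derivative u s * g s) (at s within I)"
    and cont: "continuous_on I g"
    and u0: "u 0 < 0"
  shows "u t < 0"
proof -
  define a where "a = min 0 t"
  define b where "b = max 0 t"
  have ab: "a \<le> b" by (simp add: a_def b_def)
  have sub: "{a..b} \<subseteq> I"
  proof
    fix s assume "s \<in> {a..b}"
    then have "a \<le> s" "s \<le> b" by auto
    moreover have "a \<in> I" "b \<in> I" using I unfolding a_def b_def min_def max_def by auto
    ultimately show "s \<in> I" using I(1) unfolding is_interval_1 by blast
  qed
  have cu: "continuous_on I u"
    using der by (meson DERIV_continuous continuous_on_eq_continuous_within)
  have "compact (g ` {a..b})"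
    by (rule compact_continuous_image) (use cont sub continuous_on_subset in auto)
  then obtain M where M: "\<forall>s\<in>{a..b}. \<bar>g s\<bar> \<le> M"
    using compact_imp_bounded bounded_real by (metis imageI)
  have nz: "u z \<noteq> 0" if z: "z \<in> {a..b}" for z
  proof (cases "z \<ge> 0")
    case True
    have "a \<le> 0" "0 \<le> b" by (simp_all add: a_def b_def)
    then have sub2: "{0..z} \<subseteq> I" using sub z by (meson atLeastAtMost_iff atLeastatMost_subset_iff order_trans subset_trans)
    have "(u z)^2 * exp (2*M*z) \<ge> (u 0)^2 * exp (2*M*0)"
      by (rule nz_aux(1)[OF sub2 True der]) (use M z in \<open>auto simp: a_def b_def\<close>)
    moreover have "(u 0)^2 > 0" using u0 by simp
    ultimately show ?thesis by auto
  next
    case False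
    have "a \<le> 0" "0 \<le> b" by (simp_all add: a_def b_def)
    then have sub2: "{z..0} \<subseteq> I" using sub z by (meson atLeastAtMost_iff atLeastatMost_subset_iff order_trans subset_trans)
    have "(u z)^2 * exp (-2*M*z) \<ge> (u 0)^2 * exp (-2*M*0)"
      by (rule nz_aux(2)[OF sub2 _ der]) (use M z False in \<open>auto simp: a_def b_def\<close>)
    moreover have "(u 0)^2 > 0" using u0 by simp
    ultimately show ?thesis by auto
  qed
  have cab: "continuous_on {a..b} u" using cu sub continuous_on_subset by blast
  show ?thesis
  proof (rule ccontr)
    assume "\<not> u t < 0"
    then have ut: "u t \<ge> 0" by simp
    show False
    proof (cases "t \<ge> 0")
      case True
      then have "a = 0" "b = t" by (auto simp: a_def b_def)
      then obtain x where "0 \<le> x" "x \<le> t" "u x = 0"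
        using IVT'[of u 0 0 t] u0 ut True cab by auto
      then show False using nz \<open>a = 0\<close> \<open>b = t\<close> by auto
    next
      case False
      then have "a = t" "b = 0" by (auto simp: a_def b_def)
      then obtain x where "t \<le> x" "x \<le> 0" "u x = 0"
        using IVT2'[of u 0 0 t] u0 ut False cab by auto
      then show False using nz \<open>a = t\<close> \<open>b = 0\<close> by auto
    qed
  qed
qed

lemma cont_of_deriv:
  assumes "\<forall>s\<in>I. (f has_real_derivative f' s) (at s within I)"
  shows "continuous_on I f"
  using assms by (meson DERIV_continuous continuous_on_eq_continuous_within)

lemma alg12:
  fixes d x1 x2 x3 :: real
  assumes "x1 > 0" "x2 > 0" "x3 > 0"
  shows "-2 * r1 d x1 x2 x3 * x1 - -2 * r2 d x1 x2 x3 * x2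
     = (x1 - x2) * (- d * ((x1 + x2)^2 - x3^2) / (x1 * x2 * x3))"
  using assms unfolding r1_def r2_def ric_def
  by (simp add: field_simps) (simp add: algebra_simps power2_eq_square power3_eq_cube)

lemma alg31:
  fixes d x1 x2 x3 :: real
  assumes "x1 > 0" "x2 > 0" "x3 > 0"
  shows "-2 * r3 d x1 x2 x3 * x3 - -2 * r1 d x1 x2 x3 * x1
     = (x3 - x1) * (- d * ((x1 + x3)^2 - x2^2) / (x1 * x2 * x3))"
  using assms unfolding r1_def r3_def ric_def
  by (simp add: field_simps) (simp add: algebra_simps power2_eq_square power3_eq_cube)


lemma cont_g:
  fixes x1 x2 x3 :: "real \<Rightarrow> real" and d :: real
  assumes "continuous_on I x1" "continuous_on I x2" "continuous_on I x3"
    and "\<forall>t\<in>I. x1 t > 0 \<and> x2 t > 0 \<and> x3 t > 0"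
  shows "continuous_on I (\<lambda>t. - d * ((x1 t + x2 t)^2 - x3 t^2) / (x1 t * x2 t * x3 t))"
  by (intro continuous_intros assms(1-3)) (use assms(4) in force)+

lemma cont_r:
  fixes x1 x2 x3 :: "real \<Rightarrow> real" and d :: real
  assumes "continuous_on I x1" "continuous_on I x2" "continuous_on I x3"
    and "\<forall>t\<in>I. x1 t > 0 \<and> x2 t > 0 \<and> x3 t > 0"
  shows "continuous_on I (\<lambda>t. r1 d (x1 t) (x2 t) (x3 t))"
    "continuous_on I (\<lambda>t. r2 d (x1 t) (x2 t) (x3 t))"
    "continuous_on I (\<lambda>t. r3 d (x1 t) (x2 t) (x3 t))"
  unfolding r1_def r2_def r3_def ric_def
  by (intro continuous_intros assms(1-3); use assms(4) in force)+

theorem mainTheorem8: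
  fixes d :: real and I :: "real set"
  assumes "d \<in> {2, 4, 8}"
    and "is_interval I" and "0 \<in> I"
  shows "(\<forall>x1 x2 x3. ricci_flow_sol d I x1 x2 x3 \<and> x2 0 > x1 0 \<and> x1 0 > x3 0 \<and> x3 0 > 0
            \<longrightarrow> (\<forall>t\<in>I. x2 t > x1 t \<and> x1 t > x3 t))
       \<and> (\<forall>x1 x2 x3. normalized_ricci_flow_sol d I x1 x2 x3 \<and> x2 0 > x1 0 \<and> x1 0 > x3 0 \<and> x3 0 > 0
            \<longrightarrow> (\<forall>t\<in>I. x2 t > x1 t \<and> x1 t > x3 t))"
proof (rule conjI; intro allI impI ballI)
  fix x1 x2 x3 t
  assume H: "ricci_flow_sol d I x1 x2 x3 \<and> x2 0 > x1 0 \<and> x1 0 > x3 0 \<and> x3 0 > 0" and t: "t \<in> I"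
  have sol: "ricci_flow_sol d I x1 x2 x3" using H by blast
  have pos: "\<forall>t\<in>I. x1 t > 0 \<and> x2 t > 0 \<and> x3 t > 0" using sol unfolding ricci_flow_sol_def by blast
  have c1: "continuous_on I x1" by (rule cont_of_deriv) (use sol in \<open>auto simp: ricci_flow_sol_def\<close>)
  have c2: "continuous_on I x2" by (rule cont_of_deriv) (use sol in \<open>auto simp: ricci_flow_sol_def\<close>)
  have c3: "continuous_on I x3" by (rule cont_of_deriv) (use sol in \<open>auto simp: ricci_flow_sol_def\<close>)
  have "(\<lambda>t. x1 t - x2 t) t < 0"
  proof (rule key[OF assms(2,3) t _ cont_g[OF c1 c2 c3 pos, of d]])
    show "\<forall>s\<in>I. ((\<lambda>t. x1 t - x2 t) has_real_derivative (x1 s - x2 s) *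
        (- d * ((x1 s + x2 s)^2 - x3 s^2) / (x1 s * x2 s * x3 s))) (at s within I)"
    proof
      fix s assume s: "s \<in> I"
      have D: "((\<lambda>t. x1 t - x2 t) has_real_derivative
          (-2 * r1 d (x1 s) (x2 s) (x3 s) * x1 s - -2 * r2 d (x1 s) (x2 s) (x3 s) * x2 s)) (at s within I)"
        using sol s unfolding ricci_flow_sol_def by (intro DERIV_diff) auto
      show "((\<lambda>t. x1 t - x2 t) has_real_derivative (x1 s - x2 s) *
        (- d * ((x1 s + x2 s)^2 - x3 s^2) / (x1 s * x2 s * x3 s))) (at s within I)"
        using D alg12[of "x1 s" "x2 s" "x3 s" d] pos s by simp
    qed
  qed (use H in simp)
  moreover have "(\<lambda>t. x3 t - x1 t) t < 0"
  proof (rule key[OF assms(2,3) t _ cont_g[OF c1 c3 c2 pos[unfolded conj_commute[of "x2 _ > 0"]], of d]])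
    show "\<forall>s\<in>I. ((\<lambda>t. x3 t - x1 t) has_real_derivative (x3 s - x1 s) *
        (- d * ((x1 s + x3 s)^2 - x2 s^2) / (x1 s * x3 s * x2 s))) (at s within I)"
    proof
      fix s assume s: "s \<in> I"
      have D: "((\<lambda>t. x3 t - x1 t) has_real_derivative
          (-2 * r3 d (x1 s) (x2 s) (x3 s) * x3 s - -2 * r1 d (x1 s) (x2 s) (x3 s) * x1 s)) (at s within I)"
        using sol s unfolding ricci_flow_sol_def by (intro DERIV_diff) auto
      show "((\<lambda>t. x3 t - x1 t) has_real_derivative (x3 s - x1 s) *
        (- d * ((x1 s + x3 s)^2 - x2 s^2) / (x1 s * x3 s * x2 s))) (at s within I)"
        using D alg31[of "x1 s" "x2 s" "x3 s" d] pos s by (simp add: mult_ac)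
    qed
  qed (use H in simp)
  ultimately show "x2 t > x1 t \<and> x1 t > x3 t" by simp
next
  fix x1 x2 x3 t
  assume H: "normalized_ricci_flow_sol d I x1 x2 x3 \<and> x2 0 > x1 0 \<and> x1 0 > x3 0 \<and> x3 0 > 0" and t: "t \<in> I"
  have sol: "normalized_ricci_flow_sol d I x1 x2 x3" using H by blast
  have pos: "\<forall>t\<in>I. x1 t > 0 \<and> x2 t > 0 \<and> x3 t > 0" using sol unfolding normalized_ricci_flow_sol_def by blast
  have c1: "continuous_on I x1" by (rule cont_of_deriv) (use sol in \<open>auto simp: normalized_ricci_flow_sol_def Let_def\<close>)
  have c2: "continuous_on I x2" by (rule cont_of_deriv) (use sol in \<open>auto simp: normalized_ricci_flow_sol_def Let_def\<close>)
  have c3: "continuous_on I x3" by (rule cont_of_deriv) (use sol in \<open>auto simp: normalized_ricci_flow_sol_def Let_def\<close>)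
  define Q where "Q = (\<lambda>t. d * (r1 d (x1 t) (x2 t) (x3 t) + r2 d (x1 t) (x2 t) (x3 t) + r3 d (x1 t) (x2 t) (x3 t)) / (3 * d))"
  have cQ: "continuous_on I Q" unfolding Q_def
    using cont_r[OF c1 c2 c3 pos, of d] assms(1) by (intro continuous_intros) auto
  have "(\<lambda>t. x1 t - x2 t) t < 0"
  proof (rule key[OF assms(2,3) t _ continuous_on_add[OF cont_g[OF c1 c2 c3 pos, of d] continuous_on_mult[OF continuous_on_const cQ, of 2]]])
    show "\<forall>s\<in>I. ((\<lambda>t. x1 t - x2 t) has_real_derivative (x1 s - x2 s) *
        (- d * ((x1 s + x2 s)^2 - x3 s^2) / (x1 s * x2 s * x3 s) + 2 * Q s)) (at s within I)"
    proof
      fix s assume s: "s \<in> I"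
      have D: "((\<lambda>t. x1 t - x2 t) has_real_derivative
          (-2 * x1 s * (r1 d (x1 s) (x2 s) (x3 s) - Q s) - -2 * x2 s * (r2 d (x1 s) (x2 s) (x3 s) - Q s))) (at s within I)"
        using sol s unfolding normalized_ricci_flow_sol_def Let_def Q_def by (intro DERIV_diff) auto
      have e: "-2 * x1 s * (r1 d (x1 s) (x2 s) (x3 s) - Q s) - -2 * x2 s * (r2 d (x1 s) (x2 s) (x3 s) - Q s)
        = (-2 * r1 d (x1 s) (x2 s) (x3 s) * x1 s - -2 * r2 d (x1 s) (x2 s) (x3 s) * x2 s) + (x1 s - x2 s) * (2 * Q s)"
        by (simp add: algebra_simps)
      show "((\<lambda>t. x1 t - x2 t) has_real_derivative (x1 s - x2 s) *
        (- d * ((x1 s + x2 s)^2 - x3 s^2) / (x1 s * x2 s * x3 s) + 2 * Q s)) (at s within I)"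
        using D unfolding e alg12[of "x1 s" "x2 s" "x3 s" d, OF pos[rule_format, OF s, THEN conjunct1]
          pos[rule_format, OF s, THEN conjunct2, THEN conjunct1] pos[rule_format, OF s, THEN conjunct2, THEN conjunct2]]
        by (simp add: algebra_simps)
    qed
  qed (use H in simp)
  moreover have "(\<lambda>t. x3 t - x1 t) t < 0"
  proof (rule key[OF assms(2,3) t _ continuous_on_add[OF cont_g[OF c1 c3 c2 pos[unfolded conj_commute[of "x2 _ > 0"]], of d] continuous_on_mult[OF continuous_on_const cQ, of 2]]])
    show "\<forall>s\<in>I. ((\<lambda>t. x3 t - x1 t) has_real_derivative (x3 s - x1 s) *
        (- d * ((x1 s + x3 s)^2 - x2 s^2) / (x1 s * x3 s * x2 s) + 2 * Q s)) (at s within I)"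
    proof
      fix s assume s: "s \<in> I"
      have D: "((\<lambda>t. x3 t - x1 t) has_real_derivative
          (-2 * x3 s * (r3 d (x1 s) (x2 s) (x3 s) - Q s) - -2 * x1 s * (r1 d (x1 s) (x2 s) (x3 s) - Q s))) (at s within I)"
        using sol s unfolding normalized_ricci_flow_sol_def Let_def Q_def by (intro DERIV_diff) auto
      have e: "-2 * x3 s * (r3 d (x1 s) (x2 s) (x3 s) - Q s) - -2 * x1 s * (r1 d (x1 s) (x2 s) (x3 s) - Q s)
        = (-2 * r3 d (x1 s) (x2 s) (x3 s) * x3 s - -2 * r1 d (x1 s) (x2 s) (x3 s) * x1 s) + (x3 s - x1 s) * (2 * Q s)"
        by (simp add: algebra_simps)
      show "((\<lambda>t. x3 t - x1 t) has_real_derivative (x3 s - x1 s) *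
        (- d * ((x1 s + x3 s)^2 - x2 s^2) / (x1 s * x3 s * x2 s) + 2 * Q s)) (at s within I)"
        using D unfolding e alg31[of "x1 s" "x2 s" "x3 s" d, OF pos[rule_format, OF s, THEN conjunct1]
          pos[rule_format, OF s, THEN conjunct2, THEN conjunct1] pos[rule_format, OF s, THEN conjunct2, THEN conjunct2]]
        by (simp add: algebra_simps)
    qed
  qed (use H in simp)
  ultimately show "x2 t > x1 t \<and> x1 t > x3 t" by simp
qed

end
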